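(* Let $M$ be a manifold, $l>0$, and let $A,B,C$ be pairwise disjoint finite sets with $A\neq\emptyset$. Then the map $$\mu:D_{A,B,C}(M,S^{2l})\to D_{A\cup B}(M,S^{2l})\wedge D_{A\cup C}(M,S^{2l}),\qquad (\xi_A,\xi_B,\xi_C)\mapsto(\xi_A\cup\xi_B,\ \xi_A\cup\xi_C)$$ is based null-homotopic.
   Context: For a finite set $S$, $F_S(M)$ is the space of injective maps $S\to M$ (ordered configurations labelled by $S$). For a sequence $\mathcal I=(I_1,\dots,I_k)$ of pairwise disjoint finite sets and a based space $(X,x_0)$, $D_{\mathcal I}(M,X)=\big(F_{\sqcup_i I_i}(M)\times_{\prod_i\mathrm{Sym}(I_i)}X^{\sqcup_i I_i}\big)/\sim$, where $\prod_i\mathrm{Sym}(I_i)$ acts diagonally by permuting coordinates and $\sim$ collapses to a single basepoint $\infty$ all elements with some label equal to $x_0$. Thus an element of $D_{A,B,C}(M,X)$ is a triple $(\xi_A,\xi_B,\xi_C)$ of labelled configurations of sizes $|A|,|B|,|C|$ with all points distinct, each unordered within its colour; $D_{A\cup B}(M,X)$ is the one-colour version for the set $A\cup B$. Here $S^{2l}$ is based at some point $x_0$ (e.g. the point at infinity of $\mathbb R^{2l}\cup\{\infty\}$). *)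

theory Defs
  imports "HOL-Analysis.Analysis"
begin

definition top_manifold :: "'m topology \<Rightarrow> nat \<Rightarrow> bool" where
  "top_manifold M n \<longleftrightarrow> Hausdorff_space M \<and> second_countable M \<and>
     (\<forall>x\<in>topspace M. \<exists>U V. openin M U \<and> x \<in> U \<and> openin (Euclidean_space n) V \<and>
        subtopology M U homeomorphic_space subtopology (Euclidean_space n) V)"

text \<open>Quotient topology on a target set T induced by a map q (with q ` topspace X \<subseteq> T;
  points of T outside the image are isolated).\<close>
definition quot_top :: "'a topology \<Rightarrow> ('a \<Rightarrow> 'b) \<Rightarrow> 'b set \<Rightarrow> 'b topology" where
  "quot_top X q T = topology (\<lambda>U. U \<subseteq> T \<and> openin X {x \<in> topspace X. q x \<in> U})"

text \<open>F_S(M) \<times> X^S: functions S \<rightarrow> M \<times> X (undefined outside S) with injective M-part.\<close>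
definition lconf_top :: "'m topology \<Rightarrow> 'x topology \<Rightarrow> 'i set \<Rightarrow> ('i \<Rightarrow> 'm \<times> 'x) topology" where
  "lconf_top M X S = subtopology (product_topology (\<lambda>_. prod_topology M X) S)
      {f. inj_on (\<lambda>i. fst (f i)) S}"

definition lconf_deg :: "'m topology \<Rightarrow> 'x topology \<Rightarrow> 'x \<Rightarrow> 'i set list \<Rightarrow> ('i \<Rightarrow> 'm \<times> 'x) set" where
  "lconf_deg M X x0 Is = {f \<in> topspace (lconf_top M X (\<Union>(set Is))). \<exists>i\<in>\<Union>(set Is). snd (f i) = x0}"

definition lconf_class :: "'m topology \<Rightarrow> 'x topology \<Rightarrow> 'x \<Rightarrow> 'i set list \<Rightarrow> ('i \<Rightarrow> 'm \<times> 'x) \<Rightarrow> ('i \<Rightarrow> 'm \<times> 'x) set" where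
  "lconf_class M X x0 Is f =
     (if f \<in> lconf_deg M X x0 Is then lconf_deg M X x0 Is
      else {f \<circ> \<sigma> | \<sigma>. \<sigma> permutes (\<Union>(set Is)) \<and> (\<forall>I\<in>set Is. \<sigma> ` I = I)})"

text \<open>D_Is(M,X), with basepoint lconf_deg M X x0 Is.\<close>
definition Dsp :: "'m topology \<Rightarrow> 'x topology \<Rightarrow> 'x \<Rightarrow> 'i set list \<Rightarrow> ('i \<Rightarrow> 'm \<times> 'x) set topology" where
  "Dsp M X x0 Is = quot_top (lconf_top M X (\<Union>(set Is))) (lconf_class M X x0 Is)
      (lconf_class M X x0 Is ` topspace (lconf_top M X (\<Union>(set Is))) \<union> {lconf_deg M X x0 Is})"

definition wedge_set :: "'a topology \<Rightarrow> 'a \<Rightarrow> 'b topology \<Rightarrow> 'b \<Rightarrow> ('a \<times> 'b) set" where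
  "wedge_set X x0 Y y0 = {p \<in> topspace (prod_topology X Y). fst p = x0 \<or> snd p = y0}"

definition smash_class :: "'a topology \<Rightarrow> 'a \<Rightarrow> 'b topology \<Rightarrow> 'b \<Rightarrow> 'a \<times> 'b \<Rightarrow> ('a \<times> 'b) set" where
  "smash_class X x0 Y y0 p = (if fst p = x0 \<or> snd p = y0 then wedge_set X x0 Y y0 else {p})"

definition smash :: "'a topology \<Rightarrow> 'a \<Rightarrow> 'b topology \<Rightarrow> 'b \<Rightarrow> ('a \<times> 'b) set topology" where
  "smash X x0 Y y0 = quot_top (prod_topology X Y) (smash_class X x0 Y y0)
      (smash_class X x0 Y y0 ` topspace (prod_topology X Y) \<union> {wedge_set X x0 Y y0})"

definition mu_map :: "'m topology \<Rightarrow> 'x topology \<Rightarrow> 'x \<Rightarrow> 'i set \<Rightarrow> 'i set \<Rightarrow> 'i set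
    \<Rightarrow> ('i \<Rightarrow> 'm \<times> 'x) set \<Rightarrow> (('i \<Rightarrow> 'm \<times> 'x) set \<times> ('i \<Rightarrow> 'm \<times> 'x) set) set" where
  "mu_map M X x0 A B C z =
     (if z = lconf_deg M X x0 [A, B, C]
      then wedge_set (Dsp M X x0 [A \<union> B]) (lconf_deg M X x0 [A \<union> B])
                     (Dsp M X x0 [A \<union> C]) (lconf_deg M X x0 [A \<union> C])
      else (let f = (SOME f. f \<in> topspace (lconf_top M X (A \<union> B \<union> C)) \<and> lconf_class M X x0 [A, B, C] f = z)
            in smash_class (Dsp M X x0 [A \<union> B]) (lconf_deg M X x0 [A \<union> B])
                           (Dsp M X x0 [A \<union> C]) (lconf_deg M X x0 [A \<union> C])
                 (lconf_class M X x0 [A \<union> B] (restrict f (A \<union> B)),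
                  lconf_class M X x0 [A \<union> C] (restrict f (A \<union> C)))))"

end

theory Submission
  imports Defs
begin


definition dk :: "nat \<Rightarrow> (nat \<Rightarrow> real) \<Rightarrow> (nat \<Rightarrow> real) \<Rightarrow> real" where
  "dk k v w = (\<Sum>j\<le>k. v j * w j)"

definition nrm :: "nat \<Rightarrow> (nat \<Rightarrow> real) \<Rightarrow> (nat \<Rightarrow> real)" where
  "nrm k v = (\<lambda>i. v i / sqrt (dk k v v))"

lemma dk_comm: "dk k v w = dk k w v"
  by (simp add: dk_def mult.commute)

lemma dk_lin3:
  "dk k (\<lambda>i. a * v i + b * w i + c * z i) y = a * dk k v y + b * dk k w y + c * dk k z y"
  by (simp add: dk_def algebra_simps sum.distrib sum_distrib_left)

lemma dk_lin2:
  "dk k (\<lambda>i. a * v i + b * w i) y = a * dk k v y + b * dk k w y"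
  by (simp add: dk_def algebra_simps sum.distrib sum_distrib_left)

lemma dk_sq3:
  "dk k (\<lambda>i. v i + A * x i + B * u i) (\<lambda>i. v i + A * x i + B * u i)
   = dk k v v + A^2 * dk k x x + B^2 * dk k u u + 2*A*dk k v x + 2*B*dk k v u + 2*A*B*dk k x u"
  by (simp add: dk_def algebra_simps sum.distrib sum_distrib_left power2_eq_square)

lemma dk_sq2:
  "dk k (\<lambda>i. a * v i + b * x i) (\<lambda>i. a * v i + b * x i)
   = a^2 * dk k v v + b^2 * dk k x x + 2*a*b*dk k v x"
  by (simp add: dk_def algebra_simps sum.distrib sum_distrib_left power2_eq_square)

lemma topspace_nsphere_iff:
  "y \<in> topspace (nsphere k) \<longleftrightarrow> dk k y y = 1 \<and> (\<forall>i>k. y i = 0)"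
  by (simp add: nsphere dk_def power2_eq_square)

lemma nrm_cont:
  assumes cv: "\<And>i. continuous_map Z euclideanreal (\<lambda>z. v z i)"
    and z: "\<And>z i. z \<in> topspace Z \<Longrightarrow> i > k \<Longrightarrow> v z i = 0"
    and pos: "\<And>z. z \<in> topspace Z \<Longrightarrow> dk k (v z) (v z) > 0"
  shows "continuous_map Z (nsphere k) (\<lambda>z. nrm k (v z))"
proof -
  have c1: "continuous_map Z (powertop_real UNIV) (\<lambda>z. nrm k (v z))"
    unfolding continuous_map_componentwise_UNIV nrm_def dk_def
  proof
    fix i
    show "continuous_map Z euclideanreal (\<lambda>x. v x i / sqrt (\<Sum>j\<le>k. v x j * v x j))"
      apply (intro continuous_intros cv)
      using pos by (auto simp: dk_def) (metis less_irrefl)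
  qed
  have "(\<Sum>i\<le>k. (nrm k (v z) i)\<^sup>2) = 1 \<and> (\<forall>i>k. nrm k (v z) i = 0)" if zz: "z \<in> topspace Z" for z
  proof -
    have p: "dk k (v z) (v z) > 0" using pos zz .
    have "(\<Sum>i\<le>k. (nrm k (v z) i)\<^sup>2) = (\<Sum>i\<le>k. (v z i)^2) / (sqrt (dk k (v z) (v z)))^2"
      by (simp add: nrm_def power_divide sum_divide_distrib)
    also have "\<dots> = 1" using p by (simp add: dk_def power2_eq_square)
    finally show ?thesis
      using z zz by (simp add: nrm_def)
  qed
  then show ?thesis unfolding nsphere continuous_map_in_subtopology using c1 by auto
qed

lemma nrm_unit: "dk k y y = 1 \<Longrightarrow> nrm k y = y"
  by (simp add: nrm_def)

lemma nrm_scale: "c > 0 \<Longrightarrow> dk k y y = 1 \<Longrightarrow> nrm k (\<lambda>i. c * y i) = y"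
proof -
  assume c: "c > 0" and y: "dk k y y = 1"
  have "dk k (\<lambda>i. c * y i) (\<lambda>i. c * y i) = c^2"
    using y by (simp add: dk_def power2_eq_square algebra_simps flip: sum_distrib_left)
  then show ?thesis using c by (simp add: nrm_def)
qed

lemma cm_cos: "continuous_map X euclideanreal f \<Longrightarrow> continuous_map X euclideanreal (\<lambda>x. cos (f x))"
proof -
  assume f: "continuous_map X euclideanreal f"
  have "continuous_map euclideanreal euclideanreal cos"
    by (simp add: continuous_map_iff_continuous2 continuous_on_cos continuous_on_id)
  from continuous_map_compose[OF f this] show ?thesis by (simp add: o_def)
qed

lemma cm_sin: "continuous_map X euclideanreal f \<Longrightarrow> continuous_map X euclideanreal (\<lambda>x. sin (f x))"
proof -
  assume f: "continuous_map X euclideanreal f"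
  have "continuous_map euclideanreal euclideanreal sin"
    by (simp add: continuous_map_iff_continuous2 continuous_on_sin continuous_on_id)
  from continuous_map_compose[OF f this] show ?thesis by (simp add: o_def)
qed

lemma dk_self_nonneg: "dk k v v \<ge> 0"
  by (simp add: dk_def sum_nonneg)

lemma dk_ge_m1:
  assumes "dk k y y = 1" "dk k p p = 1" shows "dk k y p \<ge> -1"
proof -
  have "dk k (\<lambda>i. 1 * y i + 1 * p i) (\<lambda>i. 1 * y i + 1 * p i) \<ge> 0" by (rule dk_self_nonneg)
  then show ?thesis unfolding dk_sq2 using assms by simp
qed

definition coll :: "nat \<Rightarrow> (nat \<Rightarrow> real) \<Rightarrow> real \<Rightarrow> (nat \<Rightarrow> real) \<Rightarrow> (nat \<Rightarrow> real)" where
  "coll k p t y = (\<lambda>i. max 0 (1 - t * (1 + 2 * dk k y p)) * y i + t * p i)"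

lemma coll_pos:
  assumes y: "dk k y y = 1" and p: "dk k p p = 1" and t: "0 \<le> t"
  shows "dk k (coll k p t y) (coll k p t y) > 0"
proof -
  define c where "c = dk k y p"
  define m where "m = max 0 (1 - t * (1 + 2 * c))"
  have c: "c \<ge> -1" using dk_ge_m1[OF y p] by (simp add: c_def)
  have eq: "dk k (coll k p t y) (coll k p t y) = m^2 + t^2 + 2*m*t*c"
    unfolding coll_def using dk_sq2[of k m y t p] y p by (simp add: m_def c_def)
  have m0: "m \<ge> 0" by (simp add: m_def)
  have e2: "m^2 + t^2 + 2*m*t*c = (m - t)^2 + 2*m*t*(1 + c)"
    by (simp add: power2_eq_square algebra_simps)
  have nn: "2*m*t*(1+c) \<ge> 0" using m0 t c by simp
  show ?thesis
  proof (rule ccontr)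
    assume "\<not> ?thesis"
    then have z: "(m - t)^2 + 2*m*t*(1 + c) = 0" using eq e2 nn
      by (smt (verit) zero_le_power2)
    then have mt: "m = t" using nn by (smt (verit) zero_le_power2 power_eq_0_iff)
    then have "m*t*(1+c) = 0" using z by simp
    then have "m = 0 \<or> c = -1" using mt by auto
    then show False
    proof
      assume "m = 0" then have "t = 0" using mt by simp
      then show False using \<open>m = 0\<close> by (simp add: m_def)
    next
      assume "c = -1" then have "m = 1 + t" using t by (simp add: m_def)
      then show False using mt by simp
    qed
  qed
qed

lemma coll_0: "dk k y y = 1 \<Longrightarrow> nrm k (coll k p 0 y) = y"
  by (simp add: coll_def nrm_unit)

lemma coll_1:
  assumes "dk k y p \<ge> 0" "dk k p p = 1" shows "nrm k (coll k p 1 y) = p"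
proof -
  have "max 0 (1 - 1 * (1 + 2 * dk k y p)) = 0" using assms by simp
  then show ?thesis using assms by (simp add: coll_def nrm_unit)
qed

lemma coll_fix:
  assumes p: "dk k p p = 1" and t: "0 \<le> t" shows "nrm k (coll k p t p) = p"
proof -
  have "coll k p t p = (\<lambda>i. (max 0 (1 - t * (1 + 2 * dk k p p)) + t) * p i)"
    by (simp add: coll_def algebra_simps)
  moreover have "max 0 (1 - t * (1 + 2 * dk k p p)) + t > 0" using t
    by (cases "t = 0") auto
  ultimately show ?thesis using nrm_scale p by simp
qed

definition rot :: "nat \<Rightarrow> (nat \<Rightarrow> real) \<Rightarrow> (nat \<Rightarrow> real) \<Rightarrow> real \<Rightarrow> (nat \<Rightarrow> real) \<Rightarrow> (nat \<Rightarrow> real)" where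
  "rot k x u t w = (\<lambda>i. w i + ((cos (pi*t) - 1) * dk k w x - sin (pi*t) * dk k w u) * x i
                         + ((cos (pi*t) - 1) * dk k w u + sin (pi*t) * dk k w x) * u i)"

lemma rot_sq:
  assumes x: "dk k x x = 1" and u: "dk k u u = 1" and xu: "dk k x u = 0"
  shows "dk k (rot k x u t w) (rot k x u t w) = dk k w w"
proof -
  define C where "C = cos (pi*t)"
  define S where "S = sin (pi*t)"
  define p where "p = dk k w x"
  define q where "q = dk k w u"
  have cs: "S^2 + C^2 = 1" by (simp add: C_def S_def)
  have "dk k (rot k x u t w) (rot k x u t w)
     = dk k w w + ((C - 1) * p - S * q)^2 + ((C - 1) * q + S * p)^2
        + 2*((C - 1) * p - S * q)*p + 2*((C - 1) * q + S * p)*q"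
    unfolding rot_def using dk_sq3[of k w "(C - 1) * p - S * q" x "(C - 1) * q + S * p" u] x u xu
    by (simp add: C_def S_def p_def q_def)
  also have "\<dots> = dk k w w + (S^2 + C^2 - 1) * (p^2 + q^2)"
    by (simp add: power2_eq_square algebra_simps)
  finally show ?thesis using cs by simp
qed

lemma rot_0: "rot k x u 0 w = w"
  by (simp add: rot_def)

lemma rot_1:
  assumes x: "dk k x x = 1" and xu: "dk k x u = 0"
  shows "rot k x u 1 (\<lambda>i. - x i) = x"
proof -
  have a: "dk k (\<lambda>i. - x i) x = -1" using x by (simp add: dk_def sum_negf)
  have b: "dk k (\<lambda>i. - x i) u = 0" using xu by (simp add: dk_def sum_negf)
  show ?thesis by (rule ext) (simp add: rot_def a b)
qed

lemma sum_two:
  fixes i j k :: nat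
  assumes "i \<le> k" "j \<le> k" "i \<noteq> j" "\<And>m. m \<noteq> i \<Longrightarrow> m \<noteq> j \<Longrightarrow> f m = 0"
  shows "(\<Sum>m\<le>k. f m) = f i + (f j :: real)"
proof -
  have "(\<Sum>m\<le>k. f m) = (\<Sum>m\<in>{i,j}. f m)"
    by (rule sum.mono_neutral_right) (use assms in auto)
  then show ?thesis using assms by simp
qed

lemma exists_perp:
  assumes x: "dk k x x = 1" and k: "k \<ge> 1"
  obtains u where "dk k u u = 1" "dk k x u = 0" "\<forall>m>k. u m = 0"
proof -
  obtain i where i: "i \<le> k" "x i \<noteq> 0"
  proof (rule ccontr)
    assume "\<not> thesis"
    then have "\<forall>i\<le>k. x i = 0" using that by blast
    then have "dk k x x = 0" by (simp add: dk_def)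
    then show False using x by simp
  qed
  define j where "j = (if i = 0 then 1 else (0::nat))"
  have j: "j \<le> k" "j \<noteq> i" using k by (auto simp: j_def)
  define r where "r = sqrt ((x i)^2 + (x j)^2)"
  have r2: "r^2 = (x i)^2 + (x j)^2" by (simp add: r_def)
  have rpos: "r > 0" using i by (simp add: r_def add_pos_nonneg)
  define u where "u = (\<lambda>m. if m = i then x j / r else if m = j then - x i / r else 0)"
  have "dk k u u = (x j / r) * (x j / r) + (- x i / r) * (- x i / r)"
    unfolding dk_def by (subst sum_two[OF i(1) j(1) j(2)[symmetric]]) (use j in \<open>auto simp: u_def\<close>)
  also have "\<dots> = ((x i)^2 + (x j)^2) / r^2" by (simp add: power2_eq_square add_divide_distrib)
  also have "\<dots> = 1" using rpos r2 i by simp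
  finally have uu: "dk k u u = 1" .
  have "dk k x u = x i * (x j / r) + x j * (- x i / r)"
    unfolding dk_def by (subst sum_two[OF i(1) j(1) j(2)[symmetric]]) (use j in \<open>auto simp: u_def\<close>)
  also have "\<dots> = 0" by (simp add: field_simps)
  finally have xu: "dk k x u = 0" .
  have "\<forall>m>k. u m = 0" using i j by (auto simp: u_def)
  then show ?thesis using that uu xu by blast
qed

lemma cm_const: "continuous_map Z euclideanreal (\<lambda>z. c)"
  by simp

lemma dk_cont:
  assumes "\<And>j. continuous_map Z euclideanreal (\<lambda>z. v z j)"
  shows "continuous_map Z euclideanreal (\<lambda>z. dk k (v z) w)"
  unfolding dk_def
  apply (rule continuous_map_sum) apply simp
  apply (rule continuous_map_real_mult) apply (rule assms) apply (rule cm_const)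
  done
lemma coll_cont:
  assumes f: "continuous_map Z euclideanreal f" and g: "\<And>j. continuous_map Z euclideanreal (\<lambda>z. g z j)"
  shows "continuous_map Z euclideanreal (\<lambda>z. coll k p (f z) (g z) i)"
proof -
  have d: "continuous_map Z euclideanreal (\<lambda>z. dk k (g z) p)" by (rule dk_cont[OF g])
  have "continuous_map Z euclideanreal (\<lambda>z. 1 - f z * (1 + 2 * dk k (g z) p))"
    by (rule continuous_map_diff[OF cm_const continuous_map_real_mult[OF f
          continuous_map_add[OF cm_const continuous_map_real_mult_left[OF d]]]])
  then have "continuous_map Z euclideanreal (\<lambda>z. max 0 (1 - f z * (1 + 2 * dk k (g z) p)))"
    by (rule continuous_map_real_max[OF cm_const])
  then show ?thesis unfolding coll_def
    by (rule continuous_map_add[OF continuous_map_real_mult[OF _ g] continuous_map_real_mult_right[OF f]])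
qed

lemma rot_cont:
  assumes f: "continuous_map Z euclideanreal f" and g: "\<And>j. continuous_map Z euclideanreal (\<lambda>z. g z j)"
  shows "continuous_map Z euclideanreal (\<lambda>z. rot k x u (f z) (g z) i)"
proof -
  have d1: "continuous_map Z euclideanreal (\<lambda>z. dk k (g z) x)" by (rule dk_cont[OF g])
  have d2: "continuous_map Z euclideanreal (\<lambda>z. dk k (g z) u)" by (rule dk_cont[OF g])
  have c: "continuous_map Z euclideanreal (\<lambda>z. cos (pi * f z))"
    by (rule cm_cos[OF continuous_map_real_mult_left[OF f]])
  have s: "continuous_map Z euclideanreal (\<lambda>z. sin (pi * f z))"
    by (rule cm_sin[OF continuous_map_real_mult_left[OF f]])
  have c1: "continuous_map Z euclideanreal (\<lambda>z. cos (pi * f z) - 1)"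
    by (rule continuous_map_diff[OF c cm_const])
  have A: "continuous_map Z euclideanreal (\<lambda>z. (cos (pi * f z) - 1) * dk k (g z) x - sin (pi * f z) * dk k (g z) u)"
    by (rule continuous_map_diff[OF continuous_map_real_mult[OF c1 d1] continuous_map_real_mult[OF s d2]])
  have B: "continuous_map Z euclideanreal (\<lambda>z. (cos (pi * f z) - 1) * dk k (g z) u + sin (pi * f z) * dk k (g z) x)"
    by (rule continuous_map_add[OF continuous_map_real_mult[OF c1 d2] continuous_map_real_mult[OF s d1]])
  show ?thesis unfolding rot_def
    by (rule continuous_map_add[OF continuous_map_add[OF g continuous_map_real_mult_right[OF A]]
          continuous_map_real_mult_right[OF B]])
qed
lemma sphere_maps:
  assumes x0: "x0 \<in> topspace (nsphere k)" and k: "k \<ge> 1"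
  obtains a b where
    "continuous_map (prod_topology (top_of_set {0..1::real}) (nsphere k)) (nsphere k) a"
    "continuous_map (prod_topology (top_of_set {0..1::real}) (nsphere k)) (nsphere k) b"
    "\<And>y. y \<in> topspace (nsphere k) \<Longrightarrow> a (0, y) = y"
    "\<And>y. y \<in> topspace (nsphere k) \<Longrightarrow> b (0, y) = y"
    "\<And>t. t \<in> {0..1::real} \<Longrightarrow> a (t, x0) = x0"
    "\<And>y. y \<in> topspace (nsphere k) \<Longrightarrow> a (1, y) = x0 \<or> b (1, y) = x0"
proof -
  have xx: "dk k x0 x0 = 1" and xz: "\<forall>i>k. x0 i = 0" using x0 by (auto simp: topspace_nsphere_iff)
  obtain u where uu: "dk k u u = 1" and xu: "dk k x0 u = 0" and uz: "\<forall>m>k. u m = 0"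
    using exists_perp[OF xx k] by blast
  define nx where "nx = (\<lambda>i. - x0 i)"
  have nxx: "dk k nx nx = 1" using xx by (simp add: nx_def dk_def)
  let ?Z = "prod_topology (top_of_set {0..1::real}) (nsphere k)"
  define a where "a = (\<lambda>z::real \<times> (nat \<Rightarrow> real). nrm k (coll k x0 (fst z) (snd z)))"
  define b where "b = (\<lambda>z::real \<times> (nat \<Rightarrow> real). nrm k (rot k x0 u (fst z) (coll k nx (fst z) (snd z))))"
  have cf: "continuous_map ?Z euclideanreal fst"
    using continuous_map_fst continuous_map_into_fulltopology by blast
  have cs: "continuous_map ?Z euclideanreal (\<lambda>z. snd z j)" for j
    using continuous_map_compose[OF continuous_map_snd continuous_map_nsphere_projection]
    by (simp add: o_def)
  have tsp: "fst z \<in> {0..1} \<and> snd z \<in> topspace (nsphere k)" if "z \<in> topspace ?Z" for z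
    using that by auto
  have ca: "continuous_map ?Z (nsphere k) a"
    unfolding a_def
  proof (rule nrm_cont)
    show "continuous_map ?Z euclideanreal (\<lambda>z. coll k x0 (fst z) (snd z) i)" for i
      by (rule coll_cont[OF cf cs])
    show "coll k x0 (fst z) (snd z) i = 0" if "z \<in> topspace ?Z" "k < i" for z i
    proof -
      have "snd z i = 0" using tsp[OF that(1)] that(2) unfolding topspace_nsphere_iff by blast
      then show ?thesis using that(2) xz by (simp add: coll_def)
    qed
    show "0 < dk k (coll k x0 (fst z) (snd z)) (coll k x0 (fst z) (snd z))" if "z \<in> topspace ?Z" for z
      using tsp[OF that] by (intro coll_pos xx) (auto simp: topspace_nsphere_iff)
  qed
  have cb: "continuous_map ?Z (nsphere k) b"
    unfolding b_def
  proof (rule nrm_cont)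
    show "continuous_map ?Z euclideanreal (\<lambda>z. rot k x0 u (fst z) (coll k nx (fst z) (snd z)) i)" for i
      by (rule rot_cont[OF cf coll_cont[OF cf cs]])
    show "rot k x0 u (fst z) (coll k nx (fst z) (snd z)) i = 0" if "z \<in> topspace ?Z" "k < i" for z i
    proof -
      have "snd z i = 0" using tsp[OF that(1)] that(2) unfolding topspace_nsphere_iff by blast
      then show ?thesis using that(2) xz uz by (simp add: coll_def rot_def nx_def)
    qed
    show "0 < dk k (rot k x0 u (fst z) (coll k nx (fst z) (snd z))) (rot k x0 u (fst z) (coll k nx (fst z) (snd z)))"
      if "z \<in> topspace ?Z" for z
      unfolding rot_sq[OF xx uu xu]
      using tsp[OF that] by (intro coll_pos nxx) (auto simp: topspace_nsphere_iff)
  qed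
  have a0: "a (0, y) = y" if "y \<in> topspace (nsphere k)" for y
    using that by (simp add: a_def coll_0 topspace_nsphere_iff)
  have b0: "b (0, y) = y" if "y \<in> topspace (nsphere k)" for y
    using that by (simp add: b_def rot_0 coll_0 topspace_nsphere_iff)
  have ax: "a (t, x0) = x0" if "t \<in> {0..1}" for t
    using that by (simp add: a_def coll_fix xx)
  have a1: "a (1, y) = x0 \<or> b (1, y) = x0" if "y \<in> topspace (nsphere k)" for y
  proof (cases "dk k y x0 \<ge> 0")
    case True
    then show ?thesis by (simp add: a_def coll_1 xx)
  next
    case False
    then have d: "dk k y nx \<ge> 0" by (simp add: nx_def dk_def sum_negf)
    have "coll k nx 1 y = nx"
      using d by (simp add: coll_def)
    then have "b (1, y) = nrm k x0"
      by (simp add: b_def nx_def rot_1[OF xx xu])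
    then show ?thesis by (simp add: nrm_unit xx)
  qed
  show ?thesis by (rule that[OF ca cb a0 b0 ax a1])
qed



section \<open>Quotient topology\<close>

lemma istop_quot: "istopology (\<lambda>U. U \<subseteq> T \<and> openin X {x \<in> topspace X. q x \<in> U})"
proof -
  have 1: "S \<inter> S' \<subseteq> T \<and> openin X {x \<in> topspace X. q x \<in> S \<inter> S'}"
    if a: "S \<subseteq> T \<and> openin X {x \<in> topspace X. q x \<in> S}" "S' \<subseteq> T \<and> openin X {x \<in> topspace X. q x \<in> S'}" for S S'
  proof -
    have "{x \<in> topspace X. q x \<in> S \<inter> S'} = {x \<in> topspace X. q x \<in> S} \<inter> {x \<in> topspace X. q x \<in> S'}" by auto
    then show ?thesis using a by auto
  qed
  have 2: "\<Union>K \<subseteq> T \<and> openin X {x \<in> topspace X. q x \<in> \<Union>K}"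
    if a: "\<forall>S\<in>K. S \<subseteq> T \<and> openin X {x \<in> topspace X. q x \<in> S}" for K
  proof -
    have "{x \<in> topspace X. q x \<in> \<Union>K} = \<Union>((\<lambda>S. {x \<in> topspace X. q x \<in> S}) ` K)" by auto
    moreover have "openin X (\<Union>((\<lambda>S. {x \<in> topspace X. q x \<in> S}) ` K))"
      using a by (intro openin_Union) auto
    ultimately show ?thesis using a by auto
  qed
  show ?thesis unfolding istopology_def using 1 2 by blast
qed

lemma openin_quot_top:
  "openin (quot_top X q T) U \<longleftrightarrow> U \<subseteq> T \<and> openin X {x \<in> topspace X. q x \<in> U}"
  unfolding quot_top_def by (simp add: istop_quot)

lemma topspace_quot_top:
  assumes "q ` topspace X \<subseteq> T" shows "topspace (quot_top X q T) = T"
proof -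
  have "{x \<in> topspace X. q x \<in> T} = topspace X" using assms by auto
  then have "openin (quot_top X q T) T"
    by (auto simp: openin_quot_top)
  then have "T \<subseteq> topspace (quot_top X q T)" by (rule openin_subset)
  moreover have "topspace (quot_top X q T) \<subseteq> T"
    using openin_quot_top[of X q T "topspace (quot_top X q T)"] by simp
  ultimately show ?thesis by blast
qed

lemma continuous_quot_top:
  assumes "q ` topspace X \<subseteq> T" shows "continuous_map X (quot_top X q T) q"
  unfolding continuous_map_def
  using assms by (auto simp: topspace_quot_top openin_quot_top)

lemma quotient_quot_top:
  assumes "q ` topspace X = T" shows "quotient_map X (quot_top X q T) q"
  unfolding quotient_map_def
  using assms by (auto simp: topspace_quot_top openin_quot_top)

lemma continuous_map_singleton:
  assumes "topspace X = {p}" "f p \<in> topspace Y"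
  shows "continuous_map X Y f"
  unfolding continuous_map_def
proof (intro conjI allI impI)
  show "f \<in> topspace X \<rightarrow> topspace Y" using assms by auto
  fix U assume "openin Y U"
  have "{x \<in> topspace X. f x \<in> U} = {} \<or> {x \<in> topspace X. f x \<in> U} = topspace X"
    using assms by auto
  then show "openin X {x \<in> topspace X. f x \<in> U}" by (metis openin_empty openin_topspace)
qed

section \<open>Configuration spaces\<close>

lemma topspace_lconf:
  "f \<in> topspace (lconf_top M X S) \<longleftrightarrow>
     f \<in> PiE S (\<lambda>_. topspace M \<times> topspace X) \<and> inj_on (\<lambda>i. fst (f i)) S"
  by (simp add: lconf_top_def)

lemma Dsp_single:
  "Dsp M X x0 [S] = quot_top (lconf_top M X S) (lconf_class M X x0 [S])
      (lconf_class M X x0 [S] ` topspace (lconf_top M X S) \<union> {lconf_deg M X x0 [S]})"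
  by (simp add: Dsp_def)

lemma class_img: "lconf_class M X x0 Is ` topspace (lconf_top M X (\<Union>(set Is)))
   \<subseteq> lconf_class M X x0 Is ` topspace (lconf_top M X (\<Union>(set Is))) \<union> {lconf_deg M X x0 Is}"
  by auto

lemma topspace_Dsp:
  "topspace (Dsp M X x0 Is) = lconf_class M X x0 Is ` topspace (lconf_top M X (\<Union>(set Is))) \<union> {lconf_deg M X x0 Is}"
  unfolding Dsp_def by (rule topspace_quot_top[OF class_img])

lemma class_cont: "continuous_map (lconf_top M X (\<Union>(set Is))) (Dsp M X x0 Is) (lconf_class M X x0 Is)"
  unfolding Dsp_def by (rule continuous_quot_top[OF class_img])

lemma smash_img: "smash_class X x0 Y y0 ` topspace (prod_topology X Y)
   \<subseteq> smash_class X x0 Y y0 ` topspace (prod_topology X Y) \<union> {wedge_set X x0 Y y0}"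
  by auto

lemma topspace_smash:
  "topspace (smash X x0 Y y0) = smash_class X x0 Y y0 ` topspace (prod_topology X Y) \<union> {wedge_set X x0 Y y0}"
  unfolding smash_def by (rule topspace_quot_top[OF smash_img])

lemma smash_cont: "continuous_map (prod_topology X Y) (smash X x0 Y y0) (smash_class X x0 Y y0)"
  unfolding smash_def by (rule continuous_quot_top[OF smash_img])

lemma class_deg:
  assumes "g \<in> topspace (lconf_top M X (\<Union>(set Is)))" "i \<in> \<Union>(set Is)" "snd (g i) = x0"
  shows "lconf_class M X x0 Is g = lconf_deg M X x0 Is"
  using assms by (auto simp: lconf_class_def lconf_deg_def)


definition relab :: "'i set \<Rightarrow> 'i set \<Rightarrow> ('x \<Rightarrow> 'x) \<Rightarrow> ('i \<Rightarrow> 'm \<times> 'x) \<Rightarrow> ('i \<Rightarrow> 'm \<times> 'x)" where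
  "relab S A g f = (\<lambda>i. if i \<in> S then (fst (f i), if i \<in> A then g (snd (f i)) else snd (f i)) else undefined)"

lemma relab_cont:
  assumes SS: "S \<subseteq> S'" and ca: "continuous_map (prod_topology (top_of_set {0..1::real}) X) X a"
  shows "continuous_map (prod_topology (top_of_set {0..1::real}) (lconf_top M X S')) (lconf_top M X S)
           (\<lambda>z. relab S A (\<lambda>y. a (fst z, y)) (snd z))"
proof -
  let ?Z = "prod_topology (top_of_set {0..1::real}) (lconf_top M X S')"
  have proj: "continuous_map ?Z (prod_topology M X) (\<lambda>z. snd z i)" if "i \<in> S'" for i
  proof -
    have "continuous_map (lconf_top M X S') (prod_topology M X) (\<lambda>f. f i)"
      unfolding lconf_top_def
      by (rule continuous_map_from_subtopology[OF continuous_map_product_projection[OF that]])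
    from continuous_map_compose[OF continuous_map_snd this] show ?thesis by (simp add: o_def)
  qed
  have comp: "continuous_map ?Z (prod_topology M X) (\<lambda>z. relab S A (\<lambda>y. a (fst z, y)) (snd z) i)"
    if i: "i \<in> S" for i
  proof -
    have p: "continuous_map ?Z (prod_topology M X) (\<lambda>z. snd z i)" using proj SS i by auto
    have p1: "continuous_map ?Z M (\<lambda>z. fst (snd z i))"
      using continuous_map_compose[OF p continuous_map_fst] by (simp add: o_def)
    have p2: "continuous_map ?Z X (\<lambda>z. snd (snd z i))"
      using continuous_map_compose[OF p continuous_map_snd] by (simp add: o_def)
    have p3: "continuous_map ?Z X (\<lambda>z. a (fst z, snd (snd z i)))"
    proof -
      have "continuous_map ?Z (prod_topology (top_of_set {0..1::real}) X) (\<lambda>z. (fst z, snd (snd z i)))"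
        by (rule continuous_map_pairedI[OF continuous_map_fst p2])
      from continuous_map_compose[OF this ca] show ?thesis by (simp add: o_def)
    qed
    have eq: "(\<lambda>z. relab S A (\<lambda>y. a (fst z, y)) (snd z) i)
       = (\<lambda>z. (fst (snd z i), if i \<in> A then a (fst z, snd (snd z i)) else snd (snd z i)))"
      using i by (simp add: relab_def)
    show ?thesis unfolding eq
      by (rule continuous_map_pairedI[OF p1]) (cases "i \<in> A"; simp add: p2 p3)
  qed
  have prod: "continuous_map ?Z (product_topology (\<lambda>_. prod_topology M X) S) (\<lambda>z. relab S A (\<lambda>y. a (fst z, y)) (snd z))"
    unfolding continuous_map_componentwise
    using comp by (auto simp: relab_def extensional_def)
  have inj: "inj_on (\<lambda>i. fst (relab S A (\<lambda>y. a (fst z, y)) (snd z) i)) S" if "z \<in> topspace ?Z" for z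
  proof -
    have "inj_on (\<lambda>i. fst (snd z i)) S'" using that by (auto simp: topspace_lconf)
    then have "inj_on (\<lambda>i. fst (snd z i)) S" using SS inj_on_subset by blast
    then show ?thesis unfolding inj_on_def by (auto simp: relab_def)
  qed
  show ?thesis unfolding lconf_top_def continuous_map_in_subtopology
    using prod inj by (auto simp: lconf_top_def)
qed


lemma lconf_perm_top:
  assumes h: "h \<in> topspace (lconf_top M X S)" and p: "\<pi> permutes S"
  shows "h \<circ> \<pi> \<in> topspace (lconf_top M X S)"
proof -
  have h1: "h \<in> PiE S (\<lambda>_. topspace M \<times> topspace X)" and h2: "inj_on (\<lambda>i. fst (h i)) S"
    using h by (auto simp: topspace_lconf)
  have "h \<circ> \<pi> \<in> PiE S (\<lambda>_. topspace M \<times> topspace X)"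
    using h1 p by (auto simp: PiE_def Pi_def extensional_def permutes_in_image permutes_not_in)
  moreover have "inj_on (\<lambda>i. fst ((h \<circ> \<pi>) i)) S"
  proof -
    have "inj_on \<pi> S" using p by (meson permutes_inj_on)
    moreover have "\<pi> ` S = S" using p by (rule permutes_image)
    ultimately show ?thesis using h2 unfolding inj_on_def by (metis comp_apply imageI)
  qed
  ultimately show ?thesis by (simp add: topspace_lconf)
qed

lemma class_perm:
  assumes h: "h \<in> topspace (lconf_top M X S)" and p: "\<pi> permutes S"
  shows "lconf_class M X x0 [S] (h \<circ> \<pi>) = lconf_class M X x0 [S] h"
proof -
  have hp: "h \<circ> \<pi> \<in> topspace (lconf_top M X S)" by (rule lconf_perm_top[OF h p])
  have img: "\<pi> ` S = S" using p by (rule permutes_image)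
  have degeq: "(h \<circ> \<pi> \<in> lconf_deg M X x0 [S]) = (h \<in> lconf_deg M X x0 [S])"
  proof -
    have "(\<exists>i\<in>S. snd ((h \<circ> \<pi>) i) = x0) = (\<exists>i\<in>S. snd (h i) = x0)"
      using img by (metis comp_apply imageE imageI)
    then show ?thesis using h hp by (simp add: lconf_deg_def)
  qed
  have orb: "{h \<circ> \<pi> \<circ> \<sigma> |\<sigma>. \<sigma> permutes S \<and> (\<forall>I\<in>set [S]. \<sigma> ` I = I)}
           = {h \<circ> \<sigma> |\<sigma>. \<sigma> permutes S \<and> (\<forall>I\<in>set [S]. \<sigma> ` I = I)}"
  proof (intro set_eqI iffI)
    fix g assume "g \<in> {h \<circ> \<pi> \<circ> \<sigma> |\<sigma>. \<sigma> permutes S \<and> (\<forall>I\<in>set [S]. \<sigma> ` I = I)}"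
    then obtain \<sigma> where s: "\<sigma> permutes S" and g: "g = h \<circ> \<pi> \<circ> \<sigma>" by auto
    have "\<pi> \<circ> \<sigma> permutes S" by (rule permutes_compose[OF s p])
    moreover have "g = h \<circ> (\<pi> \<circ> \<sigma>)" using g by (simp add: o_assoc)
    ultimately show "g \<in> {h \<circ> \<sigma> |\<sigma>. \<sigma> permutes S \<and> (\<forall>I\<in>set [S]. \<sigma> ` I = I)}"
      using permutes_image by fastforce
  next
    fix g assume "g \<in> {h \<circ> \<sigma> |\<sigma>. \<sigma> permutes S \<and> (\<forall>I\<in>set [S]. \<sigma> ` I = I)}"
    then obtain \<sigma> where s: "\<sigma> permutes S" and g: "g = h \<circ> \<sigma>" by auto
    have "inv \<pi> \<circ> \<sigma> permutes S" by (rule permutes_compose[OF s permutes_inv[OF p]])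
    moreover have "g = h \<circ> \<pi> \<circ> (inv \<pi> \<circ> \<sigma>)"
      using g p by (auto simp: fun_eq_iff permutes_inverses)
    ultimately show "g \<in> {h \<circ> \<pi> \<circ> \<sigma> |\<sigma>. \<sigma> permutes S \<and> (\<forall>I\<in>set [S]. \<sigma> ` I = I)}"
      using permutes_image by fastforce
  qed
  show ?thesis
    unfolding lconf_class_def using degeq orb by simp
qed

lemma restrict_perm:
  assumes p: "\<sigma> permutes S'" and img: "\<sigma> ` S = S"
  shows "restrict_id \<sigma> S permutes S"
proof (rule permutes_restrict_id)
  have "inj \<sigma>" using p by (rule permutes_inj)
  then show "bij_betw \<sigma> S S" using img by (simp add: bij_betw_def inj_on_subset[of _ UNIV])
qed

lemma relab_perm:
  assumes p: "\<sigma> permutes S'" and imgS: "\<sigma> ` S = S" and imgA: "\<sigma> ` A = A"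
  shows "relab S A g (f \<circ> \<sigma>) = relab S A g f \<circ> restrict_id \<sigma> S"
proof (rule ext)
  fix i
  have inj: "inj \<sigma>" using p by (rule permutes_inj)
  have iA: "(\<sigma> i \<in> A) = (i \<in> A)"
    using imgA inj by (metis imageE imageI injD)
  show "relab S A g (f \<circ> \<sigma>) i = (relab S A g f \<circ> restrict_id \<sigma> S) i"
  proof (cases "i \<in> S")
    case True
    then have "\<sigma> i \<in> S" using imgS by blast
    then show ?thesis using True iA by (simp add: relab_def restrict_id_def)
  next
    case False
    then show ?thesis by (simp add: relab_def restrict_id_def)
  qed
qed


lemma I01_props: "locally_compact_space (top_of_set {0..1::real})" "Hausdorff_space (top_of_set {0..1::real})"
proof -
  have "compact_space (top_of_set {0..1::real})"
    by (rule compact_space_subtopology) simp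
  then show "locally_compact_space (top_of_set {0..1::real})" by (rule compact_imp_locally_compact_space)
  show "Hausdorff_space (top_of_set {0..1::real})" by (rule Hausdorff_space_subtopology) simp
qed

lemma Un3: "\<Union>(set [A, B, C]) = A \<union> B \<union> C" "\<Union>(set [S]) = S"
  by auto

lemma in_own_class:
  assumes "f \<in> topspace (lconf_top M X (\<Union>(set Is)))" "f \<notin> lconf_deg M X x0 Is"
  shows "f \<in> lconf_class M X x0 Is f"
proof -
  have "\<exists>\<sigma>. f = f \<circ> \<sigma> \<and> \<sigma> permutes (\<Union>(set Is)) \<and> (\<forall>I\<in>set Is. \<sigma> ` I = I)"
    by (rule exI[of _ id]) simp
  then show ?thesis using assms(2) unfolding lconf_class_def by simp
qed

lemma smash_fst: "fst p = x0 \<Longrightarrow> smash_class X x0 Y y0 p = wedge_set X x0 Y y0"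
  by (simp add: smash_class_def)
lemma smash_snd: "snd p = y0 \<Longrightarrow> smash_class X x0 Y y0 p = wedge_set X x0 Y y0"
  by (simp add: smash_class_def)


lemma main_general:
  fixes M :: "'m topology" and X :: "'x topology" and A B C :: "'i set"
    and a b :: "real \<times> 'x \<Rightarrow> 'x"
  assumes x0: "x0 \<in> topspace X" and An: "A \<noteq> {}"
    and ca: "continuous_map (prod_topology (top_of_set {0..1::real}) X) X a"
    and cb: "continuous_map (prod_topology (top_of_set {0..1::real}) X) X b"
    and a0: "\<And>y. y \<in> topspace X \<Longrightarrow> a (0, y) = y"
    and b0: "\<And>y. y \<in> topspace X \<Longrightarrow> b (0, y) = y"
    and ax: "\<And>t. t \<in> {0..1::real} \<Longrightarrow> a (t, x0) = x0 \<or> b (t, x0) = x0"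
    and a1: "\<And>y. y \<in> topspace X \<Longrightarrow> a (1, y) = x0 \<or> b (1, y) = x0"
  shows "homotopic_with
           (\<lambda>h. h (lconf_deg M X x0 [A, B, C]) =
                wedge_set (Dsp M X x0 [A \<union> B]) (lconf_deg M X x0 [A \<union> B])
                          (Dsp M X x0 [A \<union> C]) (lconf_deg M X x0 [A \<union> C]))
           (Dsp M X x0 [A, B, C])
           (smash (Dsp M X x0 [A \<union> B]) (lconf_deg M X x0 [A \<union> B])
                  (Dsp M X x0 [A \<union> C]) (lconf_deg M X x0 [A \<union> C]))
           (mu_map M X x0 A B C)
           (\<lambda>_. wedge_set (Dsp M X x0 [A \<union> B]) (lconf_deg M X x0 [A \<union> B])
                          (Dsp M X x0 [A \<union> C]) (lconf_deg M X x0 [A \<union> C]))"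
proof -
  let ?D1 = "Dsp M X x0 [A \<union> B]" and ?d1 = "lconf_deg M X x0 [A \<union> B]"
  let ?D2 = "Dsp M X x0 [A \<union> C]" and ?d2 = "lconf_deg M X x0 [A \<union> C]"
  let ?W = "wedge_set ?D1 ?d1 ?D2 ?d2" and ?Sm = "smash ?D1 ?d1 ?D2 ?d2"
  let ?D = "Dsp M X x0 [A, B, C]" and ?d = "lconf_deg M X x0 [A, B, C]"
  let ?S = "A \<union> B \<union> C"
  let ?L = "lconf_top M X ?S"
  let ?cl = "lconf_class M X x0 [A, B, C]"
  let ?I = "top_of_set {0..1::real}"
  let ?P = "\<lambda>h. h ?d = ?W"
  define Hh where "Hh = (\<lambda>z::real \<times> ('i \<Rightarrow> 'm \<times> 'x). smash_class ?D1 ?d1 ?D2 ?d2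
       (lconf_class M X x0 [A \<union> B] (relab (A \<union> B) A (\<lambda>y. a (fst z, y)) (snd z)),
        lconf_class M X x0 [A \<union> C] (relab (A \<union> C) A (\<lambda>y. b (fst z, y)) (snd z))))"
  define rep where "rep = (\<lambda>z. SOME f. f \<in> topspace ?L \<and> ?cl f = z)"
  define H where "H = (\<lambda>z::real \<times> ('i \<Rightarrow> 'm \<times> 'x) set. if snd z = ?d then ?W else Hh (fst z, rep (snd z)))"
  have topD: "topspace ?D = ?cl ` topspace ?L \<union> {?d}"
    using topspace_Dsp[of M X x0 "[A, B, C]"] by (simp only: Un3)
  have topSm: "?W \<in> topspace ?Sm" by (simp add: topspace_smash)
  have r1: "continuous_map (prod_topology ?I ?L) (lconf_top M X (A \<union> B))
           (\<lambda>z. relab (A \<union> B) A (\<lambda>y. a (fst z, y)) (snd z))"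
    by (rule relab_cont[OF _ ca]) auto
  have r2: "continuous_map (prod_topology ?I ?L) (lconf_top M X (A \<union> C))
           (\<lambda>z. relab (A \<union> C) A (\<lambda>y. b (fst z, y)) (snd z))"
    by (rule relab_cont[OF _ cb]) auto
  have k1: "continuous_map (lconf_top M X (A \<union> B)) ?D1 (lconf_class M X x0 [A \<union> B])"
    using class_cont[of M X "[A \<union> B]" x0] by (simp only: Un3)
  have k2: "continuous_map (lconf_top M X (A \<union> C)) ?D2 (lconf_class M X x0 [A \<union> C])"
    using class_cont[of M X "[A \<union> C]" x0] by (simp only: Un3)
  have Hhc: "continuous_map (prod_topology ?I ?L) ?Sm Hh"
  proof -
    have c1: "continuous_map (prod_topology ?I ?L) ?D1
       (\<lambda>z. lconf_class M X x0 [A \<union> B] (relab (A \<union> B) A (\<lambda>y. a (fst z, y)) (snd z)))"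
      using continuous_map_compose[OF r1 k1] by (simp add: o_def)
    have c2: "continuous_map (prod_topology ?I ?L) ?D2
       (\<lambda>z. lconf_class M X x0 [A \<union> C] (relab (A \<union> C) A (\<lambda>y. b (fst z, y)) (snd z)))"
      using continuous_map_compose[OF r2 k2] by (simp add: o_def)
    from continuous_map_compose[OF continuous_map_pairedI[OF c1 c2] smash_cont]
    show ?thesis by (simp add: o_def Hh_def)
  qed
  have r1t: "relab (A \<union> B) A (\<lambda>y. a (t, y)) f \<in> topspace (lconf_top M X (A \<union> B))"
    if "t \<in> {0..1}" "f \<in> topspace ?L" for t f
    using continuous_map_image_subset_topspace[OF r1] that by force
  have r2t: "relab (A \<union> C) A (\<lambda>y. b (t, y)) f \<in> topspace (lconf_top M X (A \<union> C))"
    if "t \<in> {0..1}" "f \<in> topspace ?L" for t f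
    using continuous_map_image_subset_topspace[OF r2] that by force
  have cd1: "lconf_class M X x0 [A \<union> B] g = ?d1"
    if "g \<in> topspace (lconf_top M X (A \<union> B))" "i \<in> A \<union> B" "snd (g i) = x0" for g i
    by (rule class_deg) (use that in \<open>simp_all only: Un3\<close>)
  have cd2: "lconf_class M X x0 [A \<union> C] g = ?d2"
    if "g \<in> topspace (lconf_top M X (A \<union> C))" "i \<in> A \<union> C" "snd (g i) = x0" for g i
    by (rule class_deg) (use that in \<open>simp_all only: Un3\<close>)
  have W1: "Hh (t, f) = ?W" if "t \<in> {0..1}" "f \<in> topspace ?L" "i \<in> A \<union> B"
      "snd (relab (A \<union> B) A (\<lambda>y. a (t, y)) f i) = x0" for t f i
  proof -
    have "lconf_class M X x0 [A \<union> B] (relab (A \<union> B) A (\<lambda>y. a (t, y)) f) = ?d1"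
      by (rule cd1[OF r1t[OF that(1,2)] that(3,4)])
    then show ?thesis unfolding Hh_def by (intro smash_fst) simp
  qed
  have W2: "Hh (t, f) = ?W" if "t \<in> {0..1}" "f \<in> topspace ?L" "i \<in> A \<union> C"
      "snd (relab (A \<union> C) A (\<lambda>y. b (t, y)) f i) = x0" for t f i
  proof -
    have "lconf_class M X x0 [A \<union> C] (relab (A \<union> C) A (\<lambda>y. b (t, y)) f) = ?d2"
      by (rule cd2[OF r2t[OF that(1,2)] that(3,4)])
    then show ?thesis unfolding Hh_def by (intro smash_snd) simp
  qed
  have Hdeg: "Hh (t, f) = ?W" if t: "t \<in> {0..1}" and f: "f \<in> topspace ?L" and fd: "f \<in> ?d" for t f
  proof -
    obtain i where i: "i \<in> A \<union> B \<union> C" "snd (f i) = x0"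
      using fd by (auto simp: lconf_deg_def)
    show ?thesis
    proof (cases "i \<in> A")
      case True
      from ax[OF t] show ?thesis
      proof
        assume "a (t, x0) = x0"
        then show ?thesis using W1[OF t f, of i] True i by (simp add: relab_def)
      next
        assume "b (t, x0) = x0"
        then show ?thesis using W2[OF t f, of i] True i by (simp add: relab_def)
      qed
    next
      case False
      then have "i \<in> B \<or> i \<in> C" using i by blast
      then show ?thesis
      proof
        assume "i \<in> B" then show ?thesis using W1[OF t f, of i] False i by (simp add: relab_def)
      next
        assume "i \<in> C" then show ?thesis using W2[OF t f, of i] False i by (simp add: relab_def)
      qed
    qed
  qed
  have Hperm: "Hh (t, f \<circ> \<sigma>) = Hh (t, f)"
    if t: "t \<in> {0..1}" and f: "f \<in> topspace ?L" and s: "\<sigma> permutes ?S" "\<sigma> ` A = A" "\<sigma> ` B = B" "\<sigma> ` C = C" for t f \<sigma>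
  proof -
    have sAB: "\<sigma> ` (A \<union> B) = A \<union> B" and sAC: "\<sigma> ` (A \<union> C) = A \<union> C" using s by (auto simp: image_Un)
    have e1: "lconf_class M X x0 [A \<union> B] (relab (A \<union> B) A (\<lambda>y. a (t, y)) (f \<circ> \<sigma>))
        = lconf_class M X x0 [A \<union> B] (relab (A \<union> B) A (\<lambda>y. a (t, y)) f)"
      unfolding relab_perm[OF s(1) sAB s(2)]
      by (rule class_perm[OF r1t[OF t f] restrict_perm[OF s(1) sAB]])
    have e2: "lconf_class M X x0 [A \<union> C] (relab (A \<union> C) A (\<lambda>y. b (t, y)) (f \<circ> \<sigma>))
        = lconf_class M X x0 [A \<union> C] (relab (A \<union> C) A (\<lambda>y. b (t, y)) f)"
      unfolding relab_perm[OF s(1) sAC s(2)]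
      by (rule class_perm[OF r2t[OF t f] restrict_perm[OF s(1) sAC]])
    show ?thesis unfolding Hh_def using e1 e2 by simp
  qed
  have Key: "H (t, ?cl f) = Hh (t, f)" if t: "t \<in> {0..1}" and f: "f \<in> topspace ?L" for t f
  proof (cases "f \<in> ?d")
    case True
    then have "?cl f = ?d" by (simp add: lconf_class_def)
    then show ?thesis using Hdeg[OF t f True] by (simp add: H_def)
  next
    case False
    have fU: "f \<in> topspace (lconf_top M X (\<Union>(set [A, B, C])))" using f by (simp only: Un3)
    have fin: "f \<in> ?cl f" by (rule in_own_class[OF fU False])
    have nd: "?cl f \<noteq> ?d" using fin False by auto
    have ex: "\<exists>g. g \<in> topspace ?L \<and> ?cl g = ?cl f" using f by blast
    define g where "g = rep (?cl f)"
    have g: "g \<in> topspace ?L" "?cl g = ?cl f"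
      using someI_ex[OF ex] unfolding g_def rep_def by blast+
    have gnd: "g \<notin> ?d"
    proof
      assume "g \<in> ?d" then have "?cl g = ?d" by (simp add: lconf_class_def)
      then show False using g(2) nd by simp
    qed
    have gU: "g \<in> topspace (lconf_top M X (\<Union>(set [A, B, C])))" using g(1) by (simp only: Un3)
    have "g \<in> ?cl f" using in_own_class[OF gU gnd] g(2) by simp
    then obtain \<sigma> where sg: "g = f \<circ> \<sigma>" and sp: "\<sigma> permutes (\<Union>(set [A, B, C]))"
        and si: "\<forall>I\<in>set [A, B, C]. \<sigma> ` I = I"
      using False unfolding lconf_class_def by auto
    have sp': "\<sigma> permutes ?S" using sp by (simp only: Un3)
    have "H (t, ?cl f) = Hh (t, g)" using nd by (simp add: H_def g_def)
    also have "\<dots> = Hh (t, f)" unfolding sg by (rule Hperm[OF t f sp']) (use si in auto)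
    finally show ?thesis .
  qed
  show ?thesis
  proof (cases "topspace ?L = {}")
    case True
    then have tD: "topspace ?D = {?d}" using topD by simp
    have md: "mu_map M X x0 A B C ?d = ?W" by (simp add: mu_map_def)
    show ?thesis
    proof (rule homotopic_with_equal)
      show "continuous_map ?D ?Sm (mu_map M X x0 A B C)"
        by (rule continuous_map_singleton[OF tD]) (simp add: md topSm)
      show "mu_map M X x0 A B C x = ?W" if "x \<in> topspace ?D" for x
        using that tD md by simp
    qed (simp_all add: md)
  next
    case False
    then obtain f0 where f0: "f0 \<in> topspace ?L" by blast
    obtain i0 where i0: "i0 \<in> A" using An by blast
    define f1 where "f1 = f0(i0 := (fst (f0 i0), x0))"
    have f1: "f1 \<in> topspace ?L" using f0 i0 x0
      by (auto simp: topspace_lconf f1_def PiE_def Pi_def extensional_def inj_on_def)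
    have "?cl f1 = ?d" using f1 i0 by (intro class_deg) (auto simp: f1_def Un_assoc)
    then have dimg: "?d \<in> ?cl ` topspace ?L" using f1 by (metis imageI)
    have q: "quotient_map ?L ?D ?cl"
      unfolding Dsp_def Un3 by (rule quotient_quot_top) (use dimg in blast)
    have qq: "quotient_map (prod_topology ?I ?L) (prod_topology ?I ?D) (\<lambda>(x, y). (x, ?cl y))"
      by (rule quotient_map_prod_right[OF I01_props(1) _ q]) (simp add: I01_props(2))
    have Hc: "continuous_map (prod_topology ?I ?D) ?Sm H"
    proof (rule continuous_compose_quotient_map[OF qq])
      show "continuous_map (prod_topology ?I ?L) ?Sm (H \<circ> (\<lambda>(x, y). (x, ?cl y)))"
      proof (rule continuous_map_eq[OF Hhc])
        fix z assume "z \<in> topspace (prod_topology ?I ?L)"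
        then obtain t f where z: "z = (t, f)" "t \<in> {0..1}" "f \<in> topspace ?L" by auto
        show "Hh z = (H \<circ> (\<lambda>(x, y). (x, ?cl y))) z" using z Key[OF z(2,3)] by simp
      qed
    qed
    have H0: "H (0, z) = mu_map M X x0 A B C z" if z: "z \<in> topspace ?D" for z
    proof (cases "z = ?d")
      case True
      then show ?thesis by (simp add: H_def mu_map_def)
    next
      case False
      then obtain f where f: "f \<in> topspace ?L" "z = ?cl f" using z topD by auto
      have ex: "\<exists>g. g \<in> topspace ?L \<and> ?cl g = z" using f by blast
      define g where "g = rep z"
      have g: "g \<in> topspace ?L" "?cl g = z"
        using someI_ex[OF ex] unfolding g_def rep_def by blast+
      have e1: "relab (A \<union> B) A (\<lambda>y. a (0, y)) g = restrict g (A \<union> B)"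
      proof (rule ext)
        fix i show "relab (A \<union> B) A (\<lambda>y. a (0, y)) g i = restrict g (A \<union> B) i"
        proof (cases "i \<in> A \<union> B")
          case True
          then have "g i \<in> topspace M \<times> topspace X" using g(1) by (auto simp: topspace_lconf PiE_def Pi_def)
          then show ?thesis using True by (auto simp: relab_def a0)
        qed (simp add: relab_def)
      qed
      have e2: "relab (A \<union> C) A (\<lambda>y. b (0, y)) g = restrict g (A \<union> C)"
      proof (rule ext)
        fix i show "relab (A \<union> C) A (\<lambda>y. b (0, y)) g i = restrict g (A \<union> C) i"
        proof (cases "i \<in> A \<union> C")
          case True
          then have "g i \<in> topspace M \<times> topspace X" using g(1) by (auto simp: topspace_lconf PiE_def Pi_def)
          then show ?thesis using True by (auto simp: relab_def b0)
        qed (simp add: relab_def)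
      qed
      have "H (0, z) = Hh (0, g)" using False by (simp add: H_def g_def)
      also have "\<dots> = mu_map M X x0 A B C z"
        using False e1 e2 unfolding Hh_def mu_map_def Let_def g_def rep_def by simp
      finally show ?thesis .
    qed
    have H1: "H (1, z) = ?W" if z: "z \<in> topspace ?D" for z
    proof (cases "z = ?d")
      case True
      then show ?thesis by (simp add: H_def)
    next
      case False
      then obtain f where f: "f \<in> topspace ?L" "z = ?cl f" using z topD by auto
      have "snd (f i0) \<in> topspace X" using f(1) i0 by (auto simp: topspace_lconf PiE_def Pi_def)
      from a1[OF this] have "Hh (1, f) = ?W"
      proof
        assume "a (1, snd (f i0)) = x0"
        then show ?thesis using W1[OF _ f(1), of 1 i0] i0 by (simp add: relab_def)
      next
        assume "b (1, snd (f i0)) = x0"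
        then show ?thesis using W2[OF _ f(1), of 1 i0] i0 by (simp add: relab_def)
      qed
      then show ?thesis using Key[OF _ f(1), of 1] f(2) by simp
    qed
    have HP: "H (t, ?d) = ?W" for t by (simp add: H_def)
    have "homotopic_with ?P ?D ?Sm (\<lambda>z. H (0, z)) (\<lambda>z. H (1, z))"
      unfolding homotopic_with_def by (rule exI[of _ H]) (simp add: Hc HP)
    then show ?thesis
    proof (rule homotopic_with_eq)
      show "mu_map M X x0 A B C x = H (0, x)" if "x \<in> topspace ?D" for x using H0[OF that] by simp
      show "?W = H (1, x)" if "x \<in> topspace ?D" for x using H1[OF that] by simp
      have dD: "?d \<in> topspace ?D" using topD by blast
      show "(h ?d = ?W) = (k ?d = ?W)" if "\<And>x. x \<in> topspace ?D \<Longrightarrow> h x = k x" for h k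
        using that[OF dD] by simp
    qed
  qed
qed


theorem lemma2p4:
  fixes M :: "'m topology" and n l :: nat and x0 :: "nat \<Rightarrow> real"
    and A B C :: "'i set"
  assumes "top_manifold M n"
    and "l > 0"
    and "x0 \<in> topspace (nsphere (2 * l))"
    and "finite A" "finite B" "finite C"
    and "A \<inter> B = {}" "A \<inter> C = {}" "B \<inter> C = {}"
    and "A \<noteq> {}"
  shows "homotopic_with
           (\<lambda>h. h (lconf_deg M (nsphere (2 * l)) x0 [A, B, C]) =
                wedge_set (Dsp M (nsphere (2 * l)) x0 [A \<union> B]) (lconf_deg M (nsphere (2 * l)) x0 [A \<union> B])
                          (Dsp M (nsphere (2 * l)) x0 [A \<union> C]) (lconf_deg M (nsphere (2 * l)) x0 [A \<union> C]))
           (Dsp M (nsphere (2 * l)) x0 [A, B, C])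
           (smash (Dsp M (nsphere (2 * l)) x0 [A \<union> B]) (lconf_deg M (nsphere (2 * l)) x0 [A \<union> B])
                  (Dsp M (nsphere (2 * l)) x0 [A \<union> C]) (lconf_deg M (nsphere (2 * l)) x0 [A \<union> C]))
           (mu_map M (nsphere (2 * l)) x0 A B C)
           (\<lambda>_. wedge_set (Dsp M (nsphere (2 * l)) x0 [A \<union> B]) (lconf_deg M (nsphere (2 * l)) x0 [A \<union> B])
                          (Dsp M (nsphere (2 * l)) x0 [A \<union> C]) (lconf_deg M (nsphere (2 * l)) x0 [A \<union> C]))"
  proof -
  have k: "2 * l \<ge> 1" using assms(2) by simp
  obtain a b where ab:
    "continuous_map (prod_topology (top_of_set {0..1::real}) (nsphere (2 * l))) (nsphere (2 * l)) a"
    "continuous_map (prod_topology (top_of_set {0..1::real}) (nsphere (2 * l))) (nsphere (2 * l)) b"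
    "\<And>y. y \<in> topspace (nsphere (2 * l)) \<Longrightarrow> a (0, y) = y"
    "\<And>y. y \<in> topspace (nsphere (2 * l)) \<Longrightarrow> b (0, y) = y"
    "\<And>t. t \<in> {0..1::real} \<Longrightarrow> a (t, x0) = x0"
    "\<And>y. y \<in> topspace (nsphere (2 * l)) \<Longrightarrow> a (1, y) = x0 \<or> b (1, y) = x0"
    using sphere_maps[OF assms(3) k] by blast
  have ax: "\<And>t. t \<in> {0..1::real} \<Longrightarrow> a (t, x0) = x0 \<or> b (t, x0) = x0"
    using ab(5) by blast
  show ?thesis
    by (rule main_general[OF assms(3) assms(10) ab(1,2,3,4) ax ab(6)])
qed

end
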